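(* Let $d\in\mathbb{N}$, $R\in(0,\infty]$, and let $\varphi\colon[0,R)\to\mathbb{R}$ be strictly increasing and convex on $[0,R)$. Let $\mathring{B}^{(d)}_R=\{x\in\mathbb{R}^d : |x|<R\}$ (so $\mathring{B}^{(d)}_\infty=\mathbb{R}^d$) and define $\rho\colon \mathring{B}^{(d)}_R\to(0,\infty)$ by $\rho(x)=\exp(-\varphi(|x|))$. Let $U_\rho$ be the simple slice sampling transition kernel of $\rho$. Then for all $x,y\in\mathring{B}^{(d)}_R$, \[ W\big(U_\rho(x,\cdot),U_\rho(y,\cdot)\big)\le\Big(1-\frac{1}{d+1}\Big)\,\big|\,|x|-|y|\,\big|. \]
   Context: $|\cdot|$ is the Euclidean norm and $\lambda_d$ is $d$-dimensional Lebesgue measure. For an unnormalized density $\rho\colon G\to(0,\infty)$ on $G\subseteq\mathbb{R}^d$, the level sets are $G(t)=\{x\in G:\rho(x)\ge t\}$ for $t>0$, $U_t$ denotes the uniform distribution on $G(t)$, i.e. $U_t(A)=\lambda_d(A\cap G(t))/\lambda_d(G(t))$, and the simple slice sampling kernel is $U_\rho(x,A)=\frac{1}{\rho(x)}\int_0^{\rho(x)}U_t(A)\,\mathrm{d}t$ for $x\in G$, $A\in\mathcal{B}(G)$ (one step: draw $t$ uniformly in $[0,\rho(x)]$, then draw the next state uniformly on $G(t)$). For probability measures $\mu,\nu$ on $G$, the Wasserstein distance is $W(\mu,\nu)=\inf_{\gamma}\int_{G\times G}|x-y|\,\mathrm{d}\gamma(x,y)$, the infimum over all couplings $\gamma$ of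 $\mu$ and $\nu$ (measures on $G\times G$ with marginals $\mu$ and $\nu$). *)

theory Defs
  imports "HOL-Probability.Probability"
begin

definition open_ball_R :: "ereal \<Rightarrow> ('a::euclidean_space) set" where
  "open_ball_R R = {x. ereal (norm x) < R}"

definition level_set :: "'a set \<Rightarrow> ('a \<Rightarrow> real) \<Rightarrow> real \<Rightarrow> 'a set" where
  "level_set G \<rho> t = {x \<in> G. \<rho> x \<ge> t}"

definition unif_level :: "('a::euclidean_space) set \<Rightarrow> ('a \<Rightarrow> real) \<Rightarrow> real \<Rightarrow> 'a measure" where
  "unif_level G \<rho> t = uniform_measure lborel (level_set G \<rho> t)"

definition slice_kernel :: "('a::euclidean_space) set \<Rightarrow> ('a \<Rightarrow> real) \<Rightarrow> 'a \<Rightarrow> 'a measure" where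
  "slice_kernel G \<rho> x = measure_of UNIV (sets borel)
     (\<lambda>A. ennreal (1 / \<rho> x) * (\<integral>\<^sup>+ t \<in> {0..\<rho> x}. emeasure (unif_level G \<rho> t) A \<partial>lborel))"

definition couplings :: "('a::euclidean_space) measure \<Rightarrow> 'a measure \<Rightarrow> ('a \<times> 'a) measure set" where
  "couplings \<mu> \<nu> = {\<gamma>. sets \<gamma> = sets (borel \<Otimes>\<^sub>M borel) \<and>
       distr \<gamma> borel fst = \<mu> \<and> distr \<gamma> borel snd = \<nu>}"

definition wasserstein :: "('a::euclidean_space) measure \<Rightarrow> 'a measure \<Rightarrow> ennreal" where
  "wasserstein \<mu> \<nu> = (INF \<gamma> \<in> couplings \<mu> \<nu>. \<integral>\<^sup>+ z. ennreal (dist (fst z) (snd z)) \<partial>\<gamma>)"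

end

theory Submission
  imports Defs
begin


locale slice_setup =
  fixes R :: ereal and \<phi> :: "real \<Rightarrow> real"
  assumes Rpos: "R > 0"
    and smono: "strict_mono_on {r. 0 \<le> r \<and> ereal r < R} \<phi>"
    and cvx: "convex_on {r. 0 \<le> r \<and> ereal r < R} \<phi>"
begin

abbreviation "I \<equiv> {r. 0 \<le> r \<and> ereal r < R}"

definition Arad :: "real \<Rightarrow> real" where
  "Arad v = Sup (insert 0 {r \<in> I. \<phi> r \<le> v})"

lemma I_down: "r \<in> I \<Longrightarrow> 0 \<le> r' \<Longrightarrow> r' \<le> r \<Longrightarrow> r' \<in> I"
  by (auto intro: le_less_trans[of _ "ereal r"])

lemma mono_I: "a \<in> I \<Longrightarrow> b \<in> I \<Longrightarrow> a \<le> b \<Longrightarrow> \<phi> a \<le> \<phi> b"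
  using smono by (metis (no_types, lifting) order_le_less strict_mono_onD)

lemma smono_I: "a \<in> I \<Longrightarrow> b \<in> I \<Longrightarrow> a < b \<Longrightarrow> \<phi> a < \<phi> b"
  using smono by (metis (no_types, lifting) strict_mono_onD)

lemma conv_diff:
  assumes "a \<in> I" "b + h \<in> I" "a \<le> b" "0 \<le> h"
  shows "\<phi> (a + h) - \<phi> a \<le> \<phi> (b + h) - \<phi> b"
proof (cases "b + h - a = 0")
  case True
  then have "a = b" "h = 0" using assms by auto
  then show ?thesis by simp
next
  case False
  define L where "L = b + h - a"
  have L: "L > 0" using False assms unfolding L_def by auto
  have a0: "0 \<le> a" using assms(1) by simp
  have bI: "b \<in> I" using I_down[of "b+h" b] assms a0 by simp
  define lamA where "lamA = h / L"
  define lamB where "lamB = (b - a) / L"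
  have l1: "0 \<le> lamA" "lamA \<le> 1" using L assms by (auto simp: lamA_def L_def field_simps)
  have l2: "0 \<le> lamB" "lamB \<le> 1" using L assms by (auto simp: lamB_def L_def field_simps)
  have bh: "b + h = a + L" by (simp add: L_def)
  have e1: "a + h = (1 - lamA) * a + lamA * (b + h)" unfolding bh lamA_def using L
    by (simp add: field_simps)
  have e2: "b = (1 - lamB) * a + lamB * (b + h)"
  proof -
    have Lne: "L \<noteq> 0" using L by simp
    have "(1 - (b - a) / L) * a + (b - a) / L * (a + L) = a + (b - a) / L * L"
      using Lne by (simp add: field_simps)
    also have "\<dots> = b" using Lne by simp
    finally show ?thesis unfolding bh lamB_def by simp
  qed
  have s: "lamA + lamB = 1"
  proof -
    have "lamA + lamB = (h + (b - a)) / L" by (simp add: lamA_def lamB_def add_divide_distrib)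
    also have "h + (b - a) = L" by (simp add: L_def)
    finally show ?thesis using L by simp
  qed
  have c1: "\<phi> (a + h) \<le> (1 - lamA) * \<phi> a + lamA * \<phi> (b + h)"
  proof -
    have "\<phi> ((1 - lamA) * a + lamA * (b + h)) \<le> (1 - lamA) * \<phi> a + lamA * \<phi> (b + h)"
      using convex_onD[OF cvx, of lamA a "b+h"] l1 assms by simp
    then show ?thesis unfolding e1[symmetric] .
  qed
  have c2: "\<phi> b \<le> (1 - lamB) * \<phi> a + lamB * \<phi> (b + h)"
  proof -
    have "\<phi> ((1 - lamB) * a + lamB * (b + h)) \<le> (1 - lamB) * \<phi> a + lamB * \<phi> (b + h)"
      using convex_onD[OF cvx, of lamB a "b+h"] l2 assms by simp
    then show ?thesis unfolding e2[symmetric] .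
  qed
  have s1: "lamA * \<phi> a + lamB * \<phi> a = \<phi> a" using s by (metis distrib_right mult_1)
  have s2: "lamA * \<phi> (b + h) + lamB * \<phi> (b + h) = \<phi> (b + h)" using s by (metis distrib_right mult_1)
  show ?thesis using c1 c2 s1 s2 by (simp add: algebra_simps)
qed

lemma exists_pos: "\<exists>r1. r1 > 0 \<and> r1 \<in> I"
proof (cases R)
  case (real r) then show ?thesis using Rpos by (intro exI[of _ "r/2"]) auto
next
  case PInf then show ?thesis by (intro exI[of _ 1]) auto
next
  case MInf then show ?thesis using Rpos by auto
qed

lemma bdd: "bdd_above {r \<in> I. \<phi> r \<le> v}"
proof -
  obtain r1 where r1: "r1 > 0" "r1 \<in> I" using exists_pos by blast
  have z: "0 \<in> I" using Rpos by (simp add: zero_ereal_def[symmetric])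
  have d: "\<phi> r1 - \<phi> 0 > 0" using smono_I[OF z r1(2) r1(1)] by simp
  show ?thesis unfolding bdd_above_def
  proof (intro exI[of _ "max r1 (r1 * (v - \<phi> 0) / (\<phi> r1 - \<phi> 0))"] ballI)
    fix r assume r: "r \<in> {r \<in> I. \<phi> r \<le> v}"
    show "r \<le> max r1 (r1 * (v - \<phi> 0) / (\<phi> r1 - \<phi> 0))"
    proof (cases "r \<le> r1")
      case False
      define lam where "lam = r1 / r"
      have l: "0 \<le> lam" "lam \<le> 1" using False r1 by (auto simp: lam_def)
      have "\<phi> ((1 - lam) * 0 + lam * r) \<le> (1 - lam) * \<phi> 0 + lam * \<phi> r"
        using convex_onD[OF cvx l, of 0 r] z r by auto
      moreover have "(1 - lam) * 0 + lam * r = r1" using False r1 by (simp add: lam_def)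
      ultimately have "\<phi> r1 - \<phi> 0 \<le> lam * (\<phi> r - \<phi> 0)" by (simp add: algebra_simps)
      also have "\<dots> \<le> lam * (v - \<phi> 0)" using r l by (intro mult_left_mono) auto
      finally have "(\<phi> r1 - \<phi> 0) * r \<le> r1 * (v - \<phi> 0)" using False r1 by (simp add: lam_def field_simps)
      then have "r \<le> r1 * (v - \<phi> 0) / (\<phi> r1 - \<phi> 0)" using d by (simp add: field_simps mult.commute)
      then show ?thesis by simp
    qed simp
  qed
qed

lemma bdd': "bdd_above {r. 0 \<le> r \<and> ereal r < R \<and> \<phi> r \<le> v}"
  using bdd[of v] by simp

lemma Arad_mono: "mono Arad"
  unfolding mono_def Arad_def
  by (auto intro!: cSup_subset_mono bdd_above_insert[THEN iffD2] bdd bdd')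

lemma Arad_ge: "r \<in> I \<Longrightarrow> \<phi> r \<le> v \<Longrightarrow> r \<le> Arad v"
  unfolding Arad_def by (intro cSup_upper) (auto intro: bdd bdd')

lemma Arad_nonneg: "0 \<le> Arad v"
  unfolding Arad_def by (intro cSup_upper) (auto intro: bdd bdd')

lemma Arad_le: "0 \<le> c \<Longrightarrow> (\<And>r. r \<in> I \<Longrightarrow> \<phi> r \<le> v \<Longrightarrow> r \<le> c) \<Longrightarrow> Arad v \<le> c"
  unfolding Arad_def by (intro cSup_least) auto

lemma Arad_phi:
  assumes r: "r \<in> I" shows "Arad (\<phi> r) = r"
proof (rule antisym)
  show "r \<le> Arad (\<phi> r)" using r by (rule Arad_ge) simp
  show "Arad (\<phi> r) \<le> r"
  proof (rule Arad_le)
    show "0 \<le> r" using r by simp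
    fix r' assume r': "r' \<in> I" "\<phi> r' \<le> \<phi> r"
    show "r' \<le> r"
    proof (rule ccontr)
      assume "\<not> r' \<le> r"
      then have "\<phi> r < \<phi> r'" using smono_I[OF r r'(1)] by simp
      then show False using r'(2) by simp
    qed
  qed
qed

lemma Arad_diff:
  assumes "r1 \<in> I" "r2 \<in> I" "r1 \<le> r2" "0 \<le> w"
  shows "Arad (\<phi> r2 + w) - Arad (\<phi> r1 + w) \<le> r2 - r1"
proof -
  define p where "p = Arad (\<phi> r1 + w)"
  have r10: "0 \<le> r1" using assms(1) by simp
  have p: "r1 \<le> p" unfolding p_def using assms(1) assms(4) by (intro Arad_ge) simp_all
  have "Arad (\<phi> r2 + w) \<le> p + (r2 - r1)"
  proof (rule Arad_le)
    show "0 \<le> p + (r2 - r1)" using p assms(3) r10 by linarith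
    fix r' assume r': "r' \<in> I" "\<phi> r' \<le> \<phi> r2 + w"
    show "r' \<le> p + (r2 - r1)"
    proof (cases "r' \<le> r2")
      case False
      define r'' where "r'' = r' - (r2 - r1)"
      have r''0: "0 \<le> r''" using False r10 unfolding r''_def by linarith
      have r''le: "r'' \<le> r'" using assms(3) unfolding r''_def by linarith
      have r''I: "r'' \<in> I" using I_down[OF r'(1) r''0 r''le] .
      have eq: "r'' + (r2 - r1) = r'" by (simp add: r''_def)
      have r1le: "r1 \<le> r''" using False unfolding r''_def by linarith
      have h0: "0 \<le> r2 - r1" using assms(3) by linarith
      have "\<phi> (r1 + (r2 - r1)) - \<phi> r1 \<le> \<phi> (r'' + (r2 - r1)) - \<phi> r''"
        using conv_diff[of r1 r'' "r2 - r1"] assms(1) r'(1) r1le h0 unfolding eq by blast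
      then have "\<phi> r'' \<le> \<phi> r1 + w" using r'(2) unfolding eq by simp
      then have "r'' \<le> p" unfolding p_def using r''I by (intro Arad_ge) simp_all
      then show ?thesis by (simp add: r''_def)
    next
      case True
      then show ?thesis using p by linarith
    qed
  qed
  then show ?thesis by (simp add: p_def)
qed

lemma Arad_dist:
  assumes "r1 \<in> I" "r2 \<in> I" "0 \<le> w"
  shows "\<bar>Arad (\<phi> r2 + w) - Arad (\<phi> r1 + w)\<bar> \<le> \<bar>r2 - r1\<bar>"
proof (cases "r1 \<le> r2")
  case True
  have "Arad (\<phi> r1 + w) \<le> Arad (\<phi> r2 + w)" using Arad_mono mono_I[OF assms(1,2) True]
    by (auto simp: mono_def)
  then show ?thesis using Arad_diff[OF assms(1,2) True assms(3)] True by auto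
next
  case False
  have "Arad (\<phi> r2 + w) \<le> Arad (\<phi> r1 + w)" using Arad_mono mono_I[OF assms(2,1)] False
    by (auto simp: mono_def)
  then show ?thesis using Arad_diff[OF assms(2,1) _ assms(3)] False by auto
qed

lemma Arad_pos:
  assumes "v > \<phi> 0"
  shows "Arad v > 0"
proof -
  obtain r1 where r1: "r1 > 0" "r1 \<in> I" using exists_pos by blast
  have z: "0 \<in> I" using Rpos by (simp add: zero_ereal_def[symmetric])
  have d: "\<phi> r1 - \<phi> 0 > 0" using smono_I[OF z r1(2) r1(1)] by simp
  define lam where "lam = min 1 ((v - \<phi> 0) / (\<phi> r1 - \<phi> 0))"
  have l: "0 < lam" "lam \<le> 1" using d assms by (auto simp: lam_def)
  have "\<phi> ((1 - lam) * 0 + lam * r1) \<le> (1 - lam) * \<phi> 0 + lam * \<phi> r1"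
    using convex_onD[OF cvx, of lam 0 r1] l z r1 by auto
  also have "\<dots> = \<phi> 0 + lam * (\<phi> r1 - \<phi> 0)" by (simp add: algebra_simps)
  also have "\<dots> \<le> \<phi> 0 + (v - \<phi> 0)"
  proof -
    have "lam \<le> (v - \<phi> 0) / (\<phi> r1 - \<phi> 0)" by (simp add: lam_def)
    then have "lam * (\<phi> r1 - \<phi> 0) \<le> (v - \<phi> 0) / (\<phi> r1 - \<phi> 0) * (\<phi> r1 - \<phi> 0)"
      using d by (intro mult_right_mono) simp_all
    also have "\<dots> = v - \<phi> 0" using d by simp
    finally show ?thesis by simp
  qed
  finally have "\<phi> (lam * r1) \<le> v" by simp
  moreover have "lam * r1 \<in> I"
  proof (rule I_down[OF r1(2)])
    show "0 \<le> lam * r1" using l r1 by simp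
    show "lam * r1 \<le> r1" using l r1 by (intro mult_left_le_one_le) simp_all
  qed
  ultimately have "lam * r1 \<le> Arad v" by (intro Arad_ge)
  moreover have "0 < lam * r1" using l r1 by simp
  ultimately show ?thesis by linarith
qed

lemma level_ball:
  assumes "v \<ge> \<phi> 0"
  shows "{z::'a::euclidean_space. ereal (norm z) < R \<and> \<phi> (norm z) \<le> v} = ball 0 (Arad v) \<or>
         {z::'a::euclidean_space. ereal (norm z) < R \<and> \<phi> (norm z) \<le> v} = cball 0 (Arad v)"
proof -
  let ?S = "{z::'a. ereal (norm z) < R \<and> \<phi> (norm z) \<le> v}"
  have sub: "?S \<subseteq> cball 0 (Arad v)" by (auto intro!: Arad_ge)
  have sup: "ball 0 (Arad v) \<subseteq> ?S"
  proof
    fix z :: 'a assume z: "z \<in> ball 0 (Arad v)"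
    then have "norm z < Arad v" by simp
    have "\<not> (\<forall>r\<in>insert 0 {r \<in> I. \<phi> r \<le> v}. r \<le> norm z)"
    proof
      assume H: "\<forall>r\<in>insert 0 {r \<in> I. \<phi> r \<le> v}. r \<le> norm z"
      have "Sup (insert 0 {r \<in> I. \<phi> r \<le> v}) \<le> norm z"
        by (rule cSup_least) (use H in auto)
      then show False using \<open>norm z < Arad v\<close> by (simp add: Arad_def)
    qed
    then obtain r where r0: "r \<in> insert 0 {r \<in> I. \<phi> r \<le> v}" "\<not> r \<le> norm z" by blast
    have "r \<noteq> 0" using r0(2) norm_ge_zero[of z] by linarith
    then have rr: "r \<in> {r \<in> I. \<phi> r \<le> v}" using r0(1) by blast
    have r: "r \<in> I" "\<phi> r \<le> v" "norm z < r" using rr r0(2) by (blast, blast, linarith)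
    have nI: "norm z \<in> I" using I_down[OF r(1) norm_ge_zero[of z]] r(3) by simp
    have "\<phi> (norm z) \<le> v" using mono_I[OF nI r(1)] r by linarith
    then show "z \<in> ?S" using nI by simp
  qed
  show ?thesis
  proof (cases "Arad v \<in> I \<and> \<phi> (Arad v) \<le> v")
    case True
    have "cball 0 (Arad v) \<subseteq> ?S"
    proof
      fix z :: 'a assume z: "z \<in> cball 0 (Arad v)"
      show "z \<in> ?S"
      proof (cases "norm z = Arad v")
        case True
        then show ?thesis using \<open>Arad v \<in> I \<and> \<phi> (Arad v) \<le> v\<close> by simp
      next
        case False
        then have "z \<in> ball 0 (Arad v)" using z by simp
        then show ?thesis using sup by blast
      qed
    qed
    then show ?thesis using sub by blast
  next
    case False
    have "?S \<subseteq> ball 0 (Arad v)"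
    proof
      fix z :: 'a assume z: "z \<in> ?S"
      then have "norm z \<le> Arad v" using sub by auto
      moreover have "norm z \<noteq> Arad v" using z False Arad_nonneg[of v] by auto
      ultimately show "z \<in> ball 0 (Arad v)" by auto
    qed
    then show ?thesis using sup by blast
  qed
qed

end


definition U1 :: "'a::euclidean_space measure" where
  "U1 = uniform_measure lborel (cball 0 1)"

lemma sets_U1[simp, measurable_cong]: "sets U1 = sets borel"
  by (simp add: U1_def)

lemma space_U1[simp]: "space U1 = UNIV"
  by (simp add: U1_def)

lemma prob_U1: "prob_space (U1 :: 'a::euclidean_space measure)"
proof -
  have "unit_ball_vol (real DIM('a)) > 0" by (rule unit_ball_vol_pos) simp
  then have pos2: "unit_ball_vol (real DIM('a)) \<noteq> 0" by linarith
  show ?thesis unfolding U1_def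
    by (rule prob_space_uniform_measure) (simp_all add: emeasure_cball pos2)
qed

lemma sf_U1: "sigma_finite_measure (U1 :: 'a::euclidean_space measure)"
  using prob_U1 by (rule prob_space_imp_sigma_finite)

lemma ball_cball_measure:
  fixes A :: "'a::euclidean_space set"
  assumes A: "A \<in> sets borel" and a: "0 \<le> a"
  shows "emeasure lborel (ball 0 a \<inter> A) = emeasure lborel (cball 0 a \<inter> A)"
proof -
  have null: "sphere (0::'a) a \<in> null_sets lborel"
    using negligible_sphere[of "0::'a" a]
    by (auto simp: null_sets_completion_iff negligible_iff_null_sets negligible_convex_frontier)
  have "emeasure lborel (cball 0 a \<inter> A) \<le> emeasure lborel ((ball 0 a \<inter> A) \<union> sphere 0 a)"
    using A by (intro emeasure_mono) auto
  also have "\<dots> = emeasure lborel (ball 0 a \<inter> A)"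
    using A null by (intro emeasure_Un_null_set) auto
  finally have "emeasure lborel (cball 0 a \<inter> A) \<le> emeasure lborel (ball 0 a \<inter> A)" .
  moreover have "emeasure lborel (ball 0 a \<inter> A) \<le> emeasure lborel (cball 0 a \<inter> A)"
    using A by (intro emeasure_mono) auto
  ultimately show ?thesis by simp
qed

lemma scale_int:
  fixes A :: "'a::euclidean_space set"
  assumes A[measurable]: "A \<in> sets borel" and a: "0 < a"
  shows "(\<integral>\<^sup>+ u. indicator A (a *\<^sub>R u) \<partial>(U1::'a measure)) =
     emeasure lborel (cball 0 a \<inter> A) / emeasure lborel (cball (0::'a) a)"
proof -
  let ?d = "DIM('a)"
  let ?c = "unit_ball_vol (real DIM('a))"
  let ?g = "indicator (cball 0 a \<inter> A) :: 'a \<Rightarrow> ennreal"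
  have c: "?c > 0" by simp
  have mS[measurable]: "cball 0 a \<inter> A \<in> sets borel" using A by auto
  have "(\<integral>\<^sup>+ u. indicator A (a *\<^sub>R u) \<partial>(U1::'a measure)) =
      (\<integral>\<^sup>+ u. indicator A (a *\<^sub>R u) * indicator (cball 0 1) u \<partial>lborel) / emeasure lborel (cball (0::'a) 1)"
    unfolding U1_def by (rule nn_integral_uniform_measure) auto
  also have "(\<lambda>u. indicator A (a *\<^sub>R u) * indicator (cball 0 1) u) = (\<lambda>u. ?g (0 + a *\<^sub>R u))"
    using a by (auto simp: indicator_def fun_eq_iff)
  also have "emeasure lborel (cball (0::'a) 1) = ennreal ?c" by (simp add: emeasure_cball)
  finally have L: "(\<integral>\<^sup>+ u. indicator A (a *\<^sub>R u) \<partial>(U1::'a measure)) = (\<integral>\<^sup>+ u. ?g (0 + a *\<^sub>R u) \<partial>lborel) / ennreal ?c" .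
  have "emeasure lborel (cball 0 a \<inter> A) = (\<integral>\<^sup>+ u. ?g u \<partial>lborel)" by simp
  also have "\<dots> = (\<integral>\<^sup>+ u. ?g u \<partial>density (distr lborel borel (\<lambda>x. 0 + a *\<^sub>R x)) (\<lambda>_. \<bar>a\<bar>^?d))"
    using lborel_affine[of a "0::'a"] a by simp
  also have "\<dots> = (\<integral>\<^sup>+ u. ennreal (a ^ ?d) * ?g (0 + a *\<^sub>R u) \<partial>lborel)"
  proof -
    have mA'[measurable]: "A \<in> sets (distr lborel borel (\<lambda>x. 0 + a *\<^sub>R x))" using A by simp
    have mS'[measurable]: "cball 0 a \<inter> A \<in> sets (distr lborel borel (\<lambda>x. 0 + a *\<^sub>R x))" using mS by simp
    show ?thesis
      apply (subst nn_integral_density)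
        apply simp
       apply (rule borel_measurable_indicator, rule mS')
      apply (subst nn_integral_distr)
        apply simp
       apply (intro borel_measurable_times_ennreal borel_measurable_const borel_measurable_indicator mS')
      using a by (simp add: abs_of_pos)
  qed
  also have "\<dots> = ennreal (a ^ ?d) * (\<integral>\<^sup>+ u. ?g (0 + a *\<^sub>R u) \<partial>lborel)"
    by (rule nn_integral_cmult) measurable
  finally have E: "emeasure lborel (cball 0 a \<inter> A) = ennreal (a ^ ?d) * (\<integral>\<^sup>+ u. ?g (0 + a *\<^sub>R u) \<partial>lborel)" .
  have fin: "emeasure lborel (cball 0 a \<inter> A) \<le> ennreal (?c * a ^ ?d)"
    using a by (subst emeasure_cball[symmetric]) (auto intro!: emeasure_mono)
  define e where "e = measure lborel (cball 0 a \<inter> A)"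
  have nt: "emeasure lborel (cball 0 a \<inter> A) \<noteq> \<top>"
    using fin by (metis ennreal_neq_top top_unique)
  have e: "emeasure lborel (cball 0 a \<inter> A) = ennreal e" "e \<ge> 0"
    unfolding e_def using emeasure_eq_ennreal_measure[OF nt] by (simp_all add: measure_nonneg)
  have "(\<integral>\<^sup>+ u. ?g (0 + a *\<^sub>R u) \<partial>lborel) = ennreal (1 / a ^ ?d) * (ennreal (a ^ ?d) * (\<integral>\<^sup>+ u. ?g (0 + a *\<^sub>R u) \<partial>lborel))"
    using a by (simp add: ennreal_mult''[symmetric] mult.assoc[symmetric])
  also have "\<dots> = ennreal (1 / a ^ ?d) * ennreal e"
    using E e(1) by simp
  also have "\<dots> = ennreal (e / a ^ ?d)"
    using e(2) a by (simp add: ennreal_mult[symmetric])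
  finally have G: "(\<integral>\<^sup>+ u. ?g (0 + a *\<^sub>R u) \<partial>lborel) = ennreal (e / a ^ ?d)" .
  show ?thesis
    unfolding L G e(1) using a c e(2)
    by (simp add: emeasure_cball divide_ennreal field_simps)
qed

lemma ftc_part:
  fixes d :: nat
  shows "(\<integral>\<^sup>+ s. ennreal (1 - s ^ d) * indicator {0..1::real} s \<partial>lborel) = ennreal (1 - 1 / (real d + 1))"
proof -
  have "((\<lambda>s. 1 - s ^ d) has_integral
          ((1 - 1 ^ (d + 1) / (real d + 1)) - (0 - 0 ^ (d + 1) / (real d + 1)))) {0..1::real}"
  proof (rule fundamental_theorem_of_calculus)
    fix x :: real assume "x \<in> {0..1}"
    have D1: "((\<lambda>s. s ^ (d+1)) has_real_derivative (real (d+1) * x ^ d)) (at x within {0..1})"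
      using DERIV_pow[of "d+1" x "{0..1}"] by simp
    have "((\<lambda>s. s - s ^ (d + 1) / (real d + 1)) has_real_derivative (1 - real (d+1) * x ^ d / (real d + 1))) (at x within {0..1})"
      by (rule DERIV_diff[OF DERIV_ident DERIV_cdivide[OF D1]])
    moreover have "1 - real (d+1) * x ^ d / (real d + 1) = 1 - x ^ d"
      by (simp add: field_simps)
    ultimately have "((\<lambda>s. s - s ^ (d + 1) / (real d + 1)) has_real_derivative (1 - x ^ d)) (at x within {0..1})"
      by simp
    then show "((\<lambda>s. s - s ^ (d + 1) / (real d + 1)) has_vector_derivative (1 - x ^ d)) (at x within {0..1})"
      by (simp add: has_real_derivative_iff_has_vector_derivative)
  qed simp
  then have HI: "((\<lambda>s. 1 - s ^ d) has_integral (1 - 1 / (real d + 1))) {0..1::real}" by simp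
  show ?thesis
    by (rule nn_integral_has_integral_lebesgue'[OF _ HI]) (simp add: power_le_one)
qed

lemma norm_int:
  "(\<integral>\<^sup>+ u. ennreal (norm u) \<partial>(U1::'a::euclidean_space measure)) = ennreal (real DIM('a) / (real DIM('a) + 1))"
proof -
  let ?d = "DIM('a)"
  let ?c = "unit_ball_vol (real DIM('a))"
  have cpos: "?c > 0" by (rule unit_ball_vol_pos) simp
  interpret U: sigma_finite_measure "U1::'a measure" by (rule sf_U1)
  interpret P: pair_sigma_finite lborel "U1::'a measure" ..
  define f where "f = (\<lambda>(s::real) (u::'a). if 0 \<le> s \<and> s < norm u then 1 else (0::ennreal))"
  have fm: "case_prod f \<in> borel_measurable (lborel \<Otimes>\<^sub>M (U1::'a measure))"
    unfolding f_def by measurable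
  have 1: "ennreal (norm u) = (\<integral>\<^sup>+ s. f s u \<partial>lborel)" for u :: 'a
  proof -
    have "(\<lambda>s. f s u) = indicator {0..<norm u}" by (auto simp: f_def fun_eq_iff indicator_def)
    then show ?thesis by simp
  qed
  have 2: "(\<integral>\<^sup>+ u. f s u \<partial>U1) = ennreal (1 - s ^ ?d) * indicator {0..1} s" for s :: real
  proof (cases "0 \<le> s")
    case False
    then show ?thesis by (simp add: f_def)
  next
    case True
    have mS[measurable]: "{u::'a. s < norm u} \<in> sets borel" by measurable
    have "(\<integral>\<^sup>+ u. f s u \<partial>U1) = (\<integral>\<^sup>+ u. indicator {u::'a. s < norm u} u \<partial>U1)"
      using True by (intro nn_integral_cong) (auto simp: f_def)
    also have "\<dots> = emeasure U1 {u::'a. s < norm u}" by (rule nn_integral_indicator) simp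
    also have "\<dots> = emeasure lborel (cball 0 1 \<inter> {u::'a. s < norm u}) / emeasure lborel (cball (0::'a) 1)"
      unfolding U1_def by (rule emeasure_uniform_measure) auto
    also have "\<dots> = ennreal (1 - s ^ ?d) * indicator {0..1} s"
    proof (cases "s \<le> 1")
      case True2: True
      have "cball 0 1 \<inter> {u::'a. s < norm u} = cball 0 1 - cball 0 s" by auto
      then have "emeasure lborel (cball 0 1 \<inter> {u::'a. s < norm u}) = emeasure lborel (cball (0::'a) 1) - emeasure lborel (cball (0::'a) s)"
        using True2 by (simp add: emeasure_Diff emeasure_cball True subset_cball)
      also have "\<dots> = ennreal (?c - ?c * s ^ ?d)"
        using True cpos by (simp add: emeasure_cball ennreal_minus)
      finally have "emeasure lborel (cball 0 1 \<inter> {u::'a. s < norm u}) / emeasure lborel (cball (0::'a) 1) =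
          ennreal (?c - ?c * s ^ ?d) / ennreal ?c" by (simp add: emeasure_cball)
      also have "\<dots> = ennreal ((?c - ?c * s ^ ?d) / ?c)"
        using cpos True True2 by (intro divide_ennreal) (simp_all add: power_le_one mult_left_le)
      also have "(?c - ?c * s ^ ?d) / ?c = 1 - s ^ ?d" using cpos by (simp add: diff_divide_distrib order_less_imp_not_eq2)
      finally show ?thesis using True True2 by simp
    next
      case False
      then have "cball 0 1 \<inter> {u::'a. s < norm u} = {}" by auto
      then show ?thesis using False by simp
    qed
    finally show ?thesis .
  qed
  have "(\<integral>\<^sup>+ u. ennreal (norm u) \<partial>(U1::'a measure)) = (\<integral>\<^sup>+ u. (\<integral>\<^sup>+ s. f s u \<partial>lborel) \<partial>U1)"
    by (simp add: 1)
  also have "\<dots> = (\<integral>\<^sup>+ s. (\<integral>\<^sup>+ u. f s u \<partial>U1) \<partial>lborel)"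
    by (rule P.Fubini'[OF fm])
  also have "\<dots> = (\<integral>\<^sup>+ s. ennreal (1 - s ^ ?d) * indicator {0..1} s \<partial>lborel)"
    by (simp add: 2)
  also have "\<dots> = ennreal (1 - 1 / (real ?d + 1))" by (rule ftc_part)
  also have "1 - 1 / (real ?d + 1) = real ?d / (real ?d + 1)" by (simp add: field_simps)
  finally show ?thesis .
qed


definition T :: "real measure" where
  "T = uniform_measure lborel {0<..<1}"

lemma sets_T[simp, measurable_cong]: "sets T = sets borel"
  by (simp add: T_def)

lemma space_T[simp]: "space T = UNIV"
  by (simp add: T_def)

lemma prob_T: "prob_space T"
  unfolding T_def by (rule prob_space_uniform_measure) simp_all

lemma nn_integral_T:
  assumes [measurable]: "f \<in> borel_measurable borel"
  shows "(\<integral>\<^sup>+ x. f x \<partial>T) = (\<integral>\<^sup>+ x. f x * indicator {0<..<1} x \<partial>lborel)"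
  unfolding T_def by (subst nn_integral_uniform_measure) (simp_all add: divide_ennreal_def)

context slice_setup
begin

lemma Arad_meas[measurable]: "Arad \<in> borel_measurable borel"
  by (rule borel_measurable_mono[OF Arad_mono])

definition Kmap :: "real \<Rightarrow> real \<times> 'a::euclidean_space \<Rightarrow> 'a" where
  "Kmap v = (\<lambda>(\<tau>, u). Arad (v + max 0 (- ln \<tau>)) *\<^sub>R u)"

lemma Kmap_meas[measurable]: "Kmap v \<in> borel_measurable (T \<Otimes>\<^sub>M (U1::'a::euclidean_space measure))"
  unfolding Kmap_def by measurable

lemma level_eq:
  assumes t: "0 < t"
  shows "level_set (open_ball_R R) (\<lambda>z::'a::euclidean_space. exp (- \<phi> (norm z))) t =
    {z. ereal (norm z) < R \<and> \<phi> (norm z) \<le> - ln t}"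
proof -
  have E: "t \<le> exp y \<longleftrightarrow> ln t \<le> y" for y
    using t by (subst ln_le_cancel_iff[symmetric]) simp_all
  have "(t \<le> exp (- \<phi> (norm z))) \<longleftrightarrow> (\<phi> (norm z) \<le> - ln t)" for z :: 'a
    using E[of "- \<phi> (norm z)"] by linarith
  then show ?thesis unfolding level_set_def open_ball_R_def by simp
qed

lemma Ut_eq:
  assumes t: "0 < t" and v: "\<phi> 0 < - ln t" and A[measurable]: "A \<in> sets borel"
  shows "emeasure (unif_level (open_ball_R R) (\<lambda>z::'a::euclidean_space. exp (- \<phi> (norm z))) t) A =
    (\<integral>\<^sup>+ u. indicator A (Arad (- ln t) *\<^sub>R u) \<partial>(U1::'a measure))"
proof -
  define a where "a = Arad (- ln t)"
  have a: "0 < a" unfolding a_def using v by (rule Arad_pos)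
  define L where "L = level_set (open_ball_R R) (\<lambda>z::'a::euclidean_space. exp (- \<phi> (norm z))) t"
  have L: "L = ball 0 a \<or> L = cball 0 a"
    unfolding L_def level_eq[OF t] a_def using level_ball[of "- ln t"] v by auto
  have Lm: "L \<in> sets borel" using L by auto
  have "emeasure (unif_level (open_ball_R R) (\<lambda>z::'a::euclidean_space. exp (- \<phi> (norm z))) t) A =
      emeasure lborel (L \<inter> A) / emeasure lborel L"
    unfolding unif_level_def L_def[symmetric] by (rule emeasure_uniform_measure) (simp_all add: Lm)
  also have "\<dots> = emeasure lborel (cball 0 a \<inter> A) / emeasure lborel (cball (0::'a) a)"
  proof -
    have "emeasure lborel (ball 0 a \<inter> A) = emeasure lborel (cball 0 a \<inter> A)"
      using a by (intro ball_cball_measure) simp_all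
    moreover have "emeasure lborel (ball (0::'a) a) = emeasure lborel (cball (0::'a) a)"
      using a by (simp add: emeasure_ball emeasure_cball)
    ultimately show ?thesis using L by auto
  qed
  also have "\<dots> = (\<integral>\<^sup>+ u. indicator A (a *\<^sub>R u) \<partial>(U1::'a measure))"
    using a by (rule scale_int[OF A, symmetric])
  finally show ?thesis unfolding a_def .
qed

lemma kernel_eq:
  fixes x :: "'a::euclidean_space"
  assumes x: "x \<in> open_ball_R R"
  shows "slice_kernel (open_ball_R R) (\<lambda>z::'a. exp (- \<phi> (norm z))) x =
    distr (T \<Otimes>\<^sub>M (U1::'a measure)) borel (Kmap (\<phi> (norm x)))"
proof -
  let ?G = "open_ball_R R :: 'a set"
  let ?\<rho> = "\<lambda>z::'a. exp (- \<phi> (norm z))"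
  let ?N = "T \<Otimes>\<^sub>M (U1::'a measure)"
  let ?K = "Kmap (\<phi> (norm x)) :: real \<times> 'a \<Rightarrow> 'a"
  define r0 where "r0 = norm x"
  have r0I: "r0 \<in> I" using x unfolding r0_def open_ball_R_def by simp
  have zI: "0 \<in> I" using Rpos by (simp add: zero_ereal_def[symmetric])
  have phi0: "\<phi> 0 \<le> \<phi> r0" using mono_I[OF zI r0I] r0I by simp
  define s where "s = exp (- \<phi> r0)"
  have s: "0 < s" unfolding s_def by simp
  have lns: "ln s = - \<phi> r0" unfolding s_def by simp
  interpret U: sigma_finite_measure "U1::'a measure" by (rule sf_U1)
  interpret TP: prob_space T by (rule prob_T)
  have Dm: "distr ?N borel ?K = measure_of UNIV (sets borel) (emeasure (distr ?N borel ?K))"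
    using measure_of_of_measure[of "distr ?N borel ?K"] by simp
  have main: "ennreal (1 / ?\<rho> x) * (\<integral>\<^sup>+ t \<in> {0..?\<rho> x}. emeasure (unif_level ?G ?\<rho> t) A \<partial>lborel)
      = emeasure (distr ?N borel ?K) A" if A[measurable]: "A \<in> sets borel" for A
  proof -
    define h where "h = (\<lambda>a::real. \<integral>\<^sup>+ u. indicator A (a *\<^sub>R u) \<partial>(U1::'a measure))"
    have hm[measurable]: "h \<in> borel_measurable borel"
      unfolding h_def by measurable
    define F where "F = (\<lambda>t. h (Arad (- ln t)) * indicator {0<..<s} t)"
    have Fm[measurable]: "F \<in> borel_measurable borel" unfolding F_def by measurable
    have rx: "?\<rho> x = s" unfolding s_def r0_def ..
    have step_a: "(\<integral>\<^sup>+ t \<in> {0..s}. emeasure (unif_level ?G ?\<rho> t) A \<partial>lborel) = (\<integral>\<^sup>+ t. F t \<partial>lborel)"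
    proof (rule nn_integral_cong_AE)
      have "AE t in lborel. t \<noteq> 0" by (rule AE_lborel_singleton)
      moreover have "AE t in lborel. t \<noteq> s" by (rule AE_lborel_singleton)
      ultimately show "AE t in lborel. emeasure (unif_level ?G ?\<rho> t) A * indicator {0..s} t = F t"
      proof eventually_elim
        case (elim t)
        show ?case
        proof (cases "0 < t \<and> t < s")
          case True
          have "ln t < ln s" using True s by simp
          then have "\<phi> 0 < - ln t" using lns phi0 by linarith
          then have "emeasure (unif_level ?G ?\<rho> t) A = h (Arad (- ln t))"
            unfolding h_def using True by (intro Ut_eq) simp_all
          then show ?thesis using True unfolding F_def by simp
        next
          case False
          then have "t \<notin> {0..s}" "t \<notin> {0<..<s}" using elim by auto
          then show ?thesis unfolding F_def by simp
        qed
      qed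
    qed
    have step_b: "(\<integral>\<^sup>+ t. F t \<partial>lborel) = ennreal s * (\<integral>\<^sup>+ \<tau>. F (0 + s * \<tau>) \<partial>lborel)"
      using nn_integral_real_affine[OF Fm, of s 0] s by simp
    have step_c: "F (0 + s * \<tau>) = h (Arad (\<phi> r0 + max 0 (- ln \<tau>))) * indicator {0<..<1} \<tau>" for \<tau>
    proof (cases "0 < \<tau> \<and> \<tau> < 1")
      case True
      have "ln (s * \<tau>) = ln s + ln \<tau>" using True s by (simp add: ln_mult)
      moreover have "ln \<tau> < 0" using True by simp
      ultimately have "- ln (s * \<tau>) = \<phi> r0 + max 0 (- ln \<tau>)" using lns by simp
      moreover have "s * \<tau> \<in> {0<..<s}" using True s by simp
      ultimately show ?thesis using True unfolding F_def by simp
    next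
      case False
      then have "s * \<tau> \<notin> {0<..<s}" using s
        by (auto simp: zero_less_mult_iff mult_less_cancel_left2)
      then show ?thesis using False unfolding F_def by simp
    qed
    have step_d: "emeasure (distr ?N borel ?K) A = (\<integral>\<^sup>+ \<tau>. h (Arad (\<phi> r0 + max 0 (- ln \<tau>))) * indicator {0<..<1} \<tau> \<partial>lborel)"
    proof -
      have "emeasure (distr ?N borel ?K) A = (\<integral>\<^sup>+ z. indicator A z \<partial>distr ?N borel ?K)"
        by simp
      also have "\<dots> = (\<integral>\<^sup>+ w. indicator A (?K w) \<partial>?N)"
        by (rule nn_integral_distr) simp_all
      also have "\<dots> = (\<integral>\<^sup>+ \<tau>. (\<integral>\<^sup>+ u. indicator A (?K (\<tau>, u)) \<partial>U1) \<partial>T)"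
        by (rule U.nn_integral_fst[symmetric]) simp
      also have "\<dots> = (\<integral>\<^sup>+ \<tau>. h (Arad (\<phi> r0 + max 0 (- ln \<tau>))) \<partial>T)"
        unfolding h_def Kmap_def r0_def by simp
      also have "\<dots> = (\<integral>\<^sup>+ \<tau>. h (Arad (\<phi> r0 + max 0 (- ln \<tau>))) * indicator {0<..<1} \<tau> \<partial>lborel)"
        by (rule nn_integral_T) simp
      finally show ?thesis .
    qed
    have "ennreal (1 / ?\<rho> x) * (\<integral>\<^sup>+ t \<in> {0..?\<rho> x}. emeasure (unif_level ?G ?\<rho> t) A \<partial>lborel)
        = ennreal (1 / s) * (ennreal s * (\<integral>\<^sup>+ \<tau>. F (0 + s * \<tau>) \<partial>lborel))"
      unfolding rx step_a step_b ..
    also have "\<dots> = (ennreal (1 / s) * ennreal s) * (\<integral>\<^sup>+ \<tau>. F (0 + s * \<tau>) \<partial>lborel)"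
      by (simp add: mult.assoc)
    also have "ennreal (1 / s) * ennreal s = 1"
      using s by (simp add: ennreal_mult[symmetric])
    also have "(\<integral>\<^sup>+ \<tau>. F (0 + s * \<tau>) \<partial>lborel) = emeasure (distr ?N borel ?K) A"
      unfolding step_d step_c ..
    finally show ?thesis by simp
  qed
  have "slice_kernel ?G ?\<rho> x = measure_of UNIV (sets borel) (emeasure (distr ?N borel ?K))"
    unfolding slice_kernel_def
  proof (rule measure_of_eq)
    show "sets borel \<subseteq> Pow UNIV" by simp
    fix a assume "a \<in> sigma_sets UNIV (sets (borel::'a measure))"
    then have "a \<in> sets borel" using sets.sigma_sets_eq[of "borel::'a measure"] by simp
    then show "ennreal (1 / ?\<rho> x) * (\<integral>\<^sup>+ t \<in> {0..?\<rho> x}. emeasure (unif_level ?G ?\<rho> t) a \<partial>lborel) =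
        emeasure (distr ?N borel ?K) a" by (rule main)
  qed
  also have "\<dots> = distr ?N borel ?K" using Dm by simp
  finally show ?thesis .
qed

end

theorem mainTheorem1:
  fixes R :: ereal and \<phi> :: "real \<Rightarrow> real" and x y :: "'a::euclidean_space"
  assumes "R > 0"
    and "strict_mono_on {r. 0 \<le> r \<and> ereal r < R} \<phi>"
    and "convex_on {r. 0 \<le> r \<and> ereal r < R} \<phi>"
    and "x \<in> open_ball_R R" and "y \<in> open_ball_R R"
  shows "wasserstein
           (slice_kernel (open_ball_R R) (\<lambda>z. exp (- \<phi> (norm z))) x)
           (slice_kernel (open_ball_R R) (\<lambda>z. exp (- \<phi> (norm z))) y)
         \<le> ennreal ((1 - 1 / (real DIM('a) + 1)) * \<bar>norm x - norm y\<bar>)"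
proof -
  interpret slice_setup R \<phi> using assms(1-3) by unfold_locales
  interpret U: sigma_finite_measure "U1::'a measure" by (rule sf_U1)
  interpret TP: prob_space T by (rule prob_T)
  let ?N = "T \<Otimes>\<^sub>M (U1::'a measure)"
  let ?Kx = "Kmap (\<phi> (norm x)) :: real \<times> 'a \<Rightarrow> 'a"
  let ?Ky = "Kmap (\<phi> (norm y)) :: real \<times> 'a \<Rightarrow> 'a"
  let ?\<rho> = "\<lambda>z::'a. exp (- \<phi> (norm z))"
  define D where "D = \<bar>norm x - norm y\<bar>"
  define g where "g = (\<lambda>w. (?Kx w, ?Ky w))"
  define \<gamma> where "\<gamma> = distr ?N (borel \<Otimes>\<^sub>M borel) g"
  have gm[measurable]: "g \<in> measurable ?N (borel \<Otimes>\<^sub>M borel)" unfolding g_def by measurable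
  have xI: "norm x \<in> I" "norm y \<in> I" using assms(4,5) unfolding open_ball_R_def by simp_all
  have coup: "\<gamma> \<in> couplings (slice_kernel (open_ball_R R) ?\<rho> x) (slice_kernel (open_ball_R R) ?\<rho> y)"
    unfolding couplings_def
  proof (intro CollectI conjI)
    show "sets \<gamma> = sets (borel \<Otimes>\<^sub>M borel)" by (simp add: \<gamma>_def)
    have "distr \<gamma> borel fst = distr ?N borel (fst \<circ> g)"
      unfolding \<gamma>_def by (rule distr_distr) simp_all
    also have "fst \<circ> g = ?Kx" by (simp add: g_def fun_eq_iff)
    finally show "distr \<gamma> borel fst = slice_kernel (open_ball_R R) ?\<rho> x"
      using kernel_eq[OF assms(4)] by simp
    have "distr \<gamma> borel snd = distr ?N borel (snd \<circ> g)"
      unfolding \<gamma>_def by (rule distr_distr) simp_all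
    also have "snd \<circ> g = ?Ky" by (simp add: g_def fun_eq_iff)
    finally show "distr \<gamma> borel snd = slice_kernel (open_ball_R R) ?\<rho> y"
      using kernel_eq[OF assms(5)] by simp
  qed
  have "wasserstein (slice_kernel (open_ball_R R) ?\<rho> x) (slice_kernel (open_ball_R R) ?\<rho> y)
      \<le> (\<integral>\<^sup>+ z. ennreal (dist (fst z) (snd z)) \<partial>\<gamma>)"
    unfolding wasserstein_def by (rule INF_lower[OF coup])
  also have "\<dots> = (\<integral>\<^sup>+ w. ennreal (dist (?Kx w) (?Ky w)) \<partial>?N)"
    unfolding \<gamma>_def by (subst nn_integral_distr) (simp_all add: g_def)
  also have "\<dots> \<le> (\<integral>\<^sup>+ w. ennreal (D * norm (snd w)) \<partial>?N)"
  proof (rule nn_integral_mono)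
    fix w :: "real \<times> 'a"
    obtain \<tau> u where w: "w = (\<tau>, u)" by fastforce
    let ?a = "Arad (\<phi> (norm x) + max 0 (- ln \<tau>))"
    let ?b = "Arad (\<phi> (norm y) + max 0 (- ln \<tau>))"
    have "dist (?Kx w) (?Ky w) = \<bar>?a - ?b\<bar> * norm u"
      unfolding w Kmap_def dist_norm by (simp add: scaleR_diff_left[symmetric])
    also have "\<bar>?a - ?b\<bar> \<le> D"
      using Arad_dist[OF xI(2) xI(1), of "max 0 (- ln \<tau>)"] unfolding D_def by simp
    then have "\<bar>?a - ?b\<bar> * norm u \<le> D * norm u" by (rule mult_right_mono) simp
    finally show "ennreal (dist (?Kx w) (?Ky w)) \<le> ennreal (D * norm (snd w))"
      unfolding w by (intro ennreal_leI) simp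
  qed
  also have "\<dots> = (\<integral>\<^sup>+ \<tau>. (\<integral>\<^sup>+ u. ennreal (D * norm u) \<partial>(U1::'a measure)) \<partial>T)"
  proof -
    have m: "(\<lambda>w. ennreal (D * norm (snd w))) \<in> borel_measurable ?N" by measurable
    show ?thesis using U.nn_integral_fst[OF m] unfolding snd_conv by (rule sym)
  qed
  also have "\<dots> = (\<integral>\<^sup>+ \<tau>. ennreal D * ennreal (real DIM('a) / (real DIM('a) + 1)) \<partial>T)"
  proof -
    have "(\<integral>\<^sup>+ u. ennreal (D * norm u) \<partial>(U1::'a measure)) = (\<integral>\<^sup>+ u. ennreal D * ennreal (norm u) \<partial>(U1::'a measure))"
      unfolding D_def by (simp add: ennreal_mult)
    also have "\<dots> = ennreal D * (\<integral>\<^sup>+ u. ennreal (norm u) \<partial>(U1::'a measure))"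
      by (rule nn_integral_cmult) simp
    also have "\<dots> = ennreal D * ennreal (real DIM('a) / (real DIM('a) + 1))"
      by (simp add: norm_int)
    finally show ?thesis by simp
  qed
  also have "\<dots> = ennreal D * ennreal (real DIM('a) / (real DIM('a) + 1))"
  proof -
    have "emeasure T UNIV = 1" using TP.emeasure_space_1 by simp
    then show ?thesis by simp
  qed
  also have "\<dots> = ennreal ((1 - 1 / (real DIM('a) + 1)) * \<bar>norm x - norm y\<bar>)"
  proof -
    have "1 - 1 / (real DIM('a) + 1) = real DIM('a) / (real DIM('a) + 1)" by (simp add: field_simps)
    then show ?thesis unfolding D_def by (simp add: ennreal_mult[symmetric] mult.commute)
  qed
  finally show ?thesis .
qed

end
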